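(* Let $q\in\mathbb{C}$ with $|q|=1$, not a root of unity, with a fixed square root $q^{1/2}$. Let $\mathcal{A}=SL_q(2,\mathbb{R})$ be the Hopf $*$-algebra generated by self-adjoint $a,b,c,d$ with relations $ab=q\,ba$, $ac=q\,ca$, $bc=cb$, $bd=q\,db$, $cd=q\,dc$, $da-q^{-1}bc=1=ad-q\,bc$, comultiplication $\Delta(a)=a\otimes a+b\otimes c$, $\Delta(b)=a\otimes b+b\otimes d$, $\Delta(c)=c\otimes a+d\otimes c$, $\Delta(d)=c\otimes b+d\otimes d$, counit $\varepsilon(a)=\varepsilon(d)=1$, $\varepsilon(b)=\varepsilon(c)=0$, and antipode $S(a)=d$, $S(b)=-q^{-1}b$, $S(c)=-q\,c$, $S(d)=a$. Put $\tau=*\circ S$. For $\mu,\nu\in\mathbb{R}$ let $\mathcal{C}_{\mu\nu}$ be the linear span of $a-d+2q^{1/2}\mu\,b$ and $q\nu\,b+c$. Then $\mathcal{C}_{\mu\nu}$ is a $\tau$-invariant two-sided coideal of $\mathcal{A}$.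
   Context: A two-sided coideal $I$ is a subspace with $\varepsilon(I)=0$ and $\Delta(I)\subset I\otimes\mathcal{A}+\mathcal{A}\otimes I$; $\tau$-invariant means $\tau(I)\subset I$. *)

theory Defs
  imports Complex_Main
begin

text \<open>A complex algebra is modelled as a ring 'a together with a central unital ring
  homomorphism iota from the complex numbers; scalar multiplication z.x is iota z * x.\<close>

definition C_algebra :: "(complex \<Rightarrow> 'a::ring_1) \<Rightarrow> bool" where
  "C_algebra \<iota> \<longleftrightarrow> \<iota> 0 = 0 \<and> \<iota> 1 = 1 \<and>
     (\<forall>z w. \<iota> (z + w) = \<iota> z + \<iota> w) \<and> (\<forall>z w. \<iota> (z * w) = \<iota> z * \<iota> w) \<and>
     (\<forall>z x. \<iota> z * x = x * \<iota> z)"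

definition lin_span :: "(complex \<Rightarrow> 'a::ring_1) \<Rightarrow> 'a set \<Rightarrow> 'a set" where
  "lin_span \<iota> S = {(\<Sum>v\<in>F. \<iota> (k v) * v) | k F. finite F \<and> F \<subseteq> S}"

inductive_set gen_alg :: "(complex \<Rightarrow> 'a::ring_1) \<Rightarrow> 'a set \<Rightarrow> 'a set"
  for \<iota> :: "complex \<Rightarrow> 'a" and G :: "'a set" where
  gen: "x \<in> G \<Longrightarrow> x \<in> gen_alg \<iota> G"
| scal: "\<iota> z \<in> gen_alg \<iota> G"
| add: "x \<in> gen_alg \<iota> G \<Longrightarrow> y \<in> gen_alg \<iota> G \<Longrightarrow> x + y \<in> gen_alg \<iota> G"
| mult: "x \<in> gen_alg \<iota> G \<Longrightarrow> y \<in> gen_alg \<iota> G \<Longrightarrow> x * y \<in> gen_alg \<iota> G"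

definition tensor_alg :: "(complex \<Rightarrow> 'a::ring_1) \<Rightarrow> (complex \<Rightarrow> 't::ring_1) \<Rightarrow> ('a \<Rightarrow> 'a \<Rightarrow> 't) \<Rightarrow> bool" where
  "tensor_alg \<iota> \<iota>T tns \<longleftrightarrow> C_algebra \<iota>T \<and>
     (\<forall>x y z. tns (x + y) z = tns x z + tns y z) \<and>
     (\<forall>x y z. tns x (y + z) = tns x y + tns x z) \<and>
     (\<forall>k x y. tns (\<iota> k * x) y = \<iota>T k * tns x y) \<and>
     (\<forall>k x y. tns x (\<iota> k * y) = \<iota>T k * tns x y) \<and>
     (\<forall>x y x' y'. tns x y * tns x' y' = tns (x * x') (y * y')) \<and>
     tns 1 1 = 1 \<and>
     lin_span \<iota>T {tns x y | x y. True} = UNIV"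

definition SLq2R ::
  "complex \<Rightarrow> (complex \<Rightarrow> 'a::ring_1) \<Rightarrow> (complex \<Rightarrow> 't::ring_1) \<Rightarrow> ('a \<Rightarrow> 'a \<Rightarrow> 't) \<Rightarrow>
   ('a \<Rightarrow> 'a) \<Rightarrow> ('a \<Rightarrow> 't) \<Rightarrow> ('a \<Rightarrow> complex) \<Rightarrow> ('a \<Rightarrow> 'a) \<Rightarrow> 'a \<Rightarrow> 'a \<Rightarrow> 'a \<Rightarrow> 'a \<Rightarrow> bool" where
  "SLq2R q \<iota> \<iota>T tns st Dl ep S a b c d \<longleftrightarrow>
     C_algebra \<iota> \<and> tensor_alg \<iota> \<iota>T tns \<and>
     \<comment> \<open>generation\<close>
     gen_alg \<iota> {a, b, c, d} = UNIV \<and>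
     \<comment> \<open>star: antilinear anti-multiplicative involution\<close>
     (\<forall>x y. st (x + y) = st x + st y) \<and> (\<forall>x y. st (x * y) = st y * st x) \<and>
     (\<forall>x. st (st x) = x) \<and> (\<forall>z. st (\<iota> z) = \<iota> (cnj z)) \<and>
     \<comment> \<open>comultiplication: unital algebra homomorphism\<close>
     (\<forall>x y. Dl (x + y) = Dl x + Dl y) \<and> (\<forall>x y. Dl (x * y) = Dl x * Dl y) \<and>
     (\<forall>z. Dl (\<iota> z) = \<iota>T z) \<and>
     \<comment> \<open>counit: unital algebra homomorphism to the complex numbers\<close>
     (\<forall>x y. ep (x + y) = ep x + ep y) \<and> (\<forall>x y. ep (x * y) = ep x * ep y) \<and>
     (\<forall>z. ep (\<iota> z) = z) \<and>
     \<comment> \<open>antipode: unital linear anti-homomorphism\<close>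
     (\<forall>x y. S (x + y) = S x + S y) \<and> (\<forall>x y. S (x * y) = S y * S x) \<and>
     (\<forall>z. S (\<iota> z) = \<iota> z) \<and>
     \<comment> \<open>self-adjoint generators\<close>
     st a = a \<and> st b = b \<and> st c = c \<and> st d = d \<and>
     \<comment> \<open>relations\<close>
     a * b = \<iota> q * (b * a) \<and> a * c = \<iota> q * (c * a) \<and> b * c = c * b \<and>
     b * d = \<iota> q * (d * b) \<and> c * d = \<iota> q * (d * c) \<and>
     d * a - \<iota> (inverse q) * (b * c) = 1 \<and> a * d - \<iota> q * (b * c) = 1 \<and>
     \<comment> \<open>coproduct, counit, antipode on generators\<close>
     Dl a = tns a a + tns b c \<and> Dl b = tns a b + tns b d \<and>
     Dl c = tns c a + tns d c \<and> Dl d = tns c b + tns d d \<and>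
     ep a = 1 \<and> ep d = 1 \<and> ep b = 0 \<and> ep c = 0 \<and>
     S a = d \<and> S b = - (\<iota> (inverse q) * b) \<and> S c = - (\<iota> q * c) \<and> S d = a"

definition two_sided_coideal ::
  "(complex \<Rightarrow> 't::ring_1) \<Rightarrow> ('a \<Rightarrow> 'a \<Rightarrow> 't) \<Rightarrow> ('a \<Rightarrow> 't) \<Rightarrow> ('a \<Rightarrow> complex) \<Rightarrow> 'a set \<Rightarrow> bool" where
  "two_sided_coideal \<iota>T tns Dl ep I \<longleftrightarrow>
     (\<forall>x\<in>I. ep x = 0) \<and>
     (\<forall>x\<in>I. Dl x \<in> lin_span \<iota>T ({tns i y | i y. i \<in> I} \<union> {tns y i | i y. i \<in> I}))"

definition tau_invariant :: "('a \<Rightarrow> 'a) \<Rightarrow> ('a \<Rightarrow> 'a) \<Rightarrow> 'a set \<Rightarrow> bool" where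
  "tau_invariant st S I \<longleftrightarrow> (\<forall>x\<in>I. st (S x) \<in> I)"

end

theory Submission
  imports Defs
begin

lemma addf:
  fixes f :: "'a::ab_group_add \<Rightarrow> 'b::ab_group_add"
  assumes "\<forall>x y. f (x + y) = f x + f y"
  shows "f 0 = 0" "f (x - y) = f x - f y" "f (- x) = - f x"
proof -
  have "f 0 = f 0 + f 0" using assms by (metis add_0)
  then show z: "f 0 = 0" by simp
  have "f (x - y) + f y = f x" using assms by (metis diff_add_cancel)
  then show "f (x - y) = f x - f y" by (metis add_diff_cancel)
  have "f (- x) + f x = 0" using assms z by (metis add.left_inverse)
  then show "f (- x) = - f x" by (metis add.inverse_unique add.commute)
qed

lemma ca:
  assumes "C_algebra \<iota>"
  shows "\<iota> 0 = 0" "\<iota> 1 = 1" "\<iota> (z + w) = \<iota> z + \<iota> w" "\<iota> (z * w) = \<iota> z * \<iota> w"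
    "\<iota> z * x = x * \<iota> z" "\<iota> (- z) = - \<iota> z" "\<iota> (z - w) = \<iota> z - \<iota> w"
proof -
  have h: "\<forall>x y. \<iota> (x + y) = \<iota> x + \<iota> y" using assms unfolding C_algebra_def by blast
  show "\<iota> 0 = 0" "\<iota> 1 = 1" "\<iota> (z + w) = \<iota> z + \<iota> w" "\<iota> (z * w) = \<iota> z * \<iota> w"
    "\<iota> z * x = x * \<iota> z" using assms unfolding C_algebra_def by blast+
  show "\<iota> (- z) = - \<iota> z" "\<iota> (z - w) = \<iota> z - \<iota> w" using addf[OF h] by blast+
qed

lemma span_gen:
  assumes "C_algebra \<iota>" "v \<in> S" shows "v \<in> lin_span \<iota> S"
  unfolding lin_span_def
  apply (rule CollectI, rule exI[of _ "\<lambda>_. 1"], rule exI[of _ "{v}"])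
  using assms ca(2)[OF assms(1)] by auto

lemma span_scal:
  assumes "C_algebra \<iota>" "x \<in> lin_span \<iota> S" shows "\<iota> z * x \<in> lin_span \<iota> S"
proof -
  obtain k F where x: "x = (\<Sum>v\<in>F. \<iota> (k v) * v)" "finite F" "F \<subseteq> S"
    using assms(2) unfolding lin_span_def by auto
  have "\<iota> z * x = (\<Sum>v\<in>F. \<iota> (z * k v) * v)"
    unfolding x(1) sum_distrib_left using ca(4)[OF assms(1)] by (simp add: mult.assoc)
  then show ?thesis using x unfolding lin_span_def
    by (intro CollectI exI[of _ "\<lambda>v. z * k v"] exI[of _ F]) simp
qed

lemma span_add:
  assumes "C_algebra \<iota>" "x \<in> lin_span \<iota> S" "y \<in> lin_span \<iota> S" shows "x + y \<in> lin_span \<iota> S"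
proof -
  obtain k F where x: "x = (\<Sum>v\<in>F. \<iota> (k v) * v)" "finite F" "F \<subseteq> S"
    using assms(2) unfolding lin_span_def by auto
  obtain l G where y: "y = (\<Sum>v\<in>G. \<iota> (l v) * v)" "finite G" "G \<subseteq> S"
    using assms(3) unfolding lin_span_def by auto
  define H where "H = F \<union> G"
  have fH: "finite H" using x y H_def by auto
  have e1: "(\<Sum>v\<in>H. \<iota> (if v \<in> F then k v else 0) * v) = x"
  proof -
    have "(\<Sum>v\<in>H. \<iota> (if v \<in> F then k v else 0) * v) = (\<Sum>v\<in>H. if v \<in> F then \<iota> (k v) * v else 0)"
      using ca(1)[OF assms(1)] by (intro sum.cong) auto
    also have "\<dots> = (\<Sum>v\<in>H \<inter> F. \<iota> (k v) * v)" using sum.inter_restrict[OF fH] by metis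
    also have "H \<inter> F = F" using H_def by auto
    finally show ?thesis using x by simp
  qed
  have e2: "(\<Sum>v\<in>H. \<iota> (if v \<in> G then l v else 0) * v) = y"
  proof -
    have "(\<Sum>v\<in>H. \<iota> (if v \<in> G then l v else 0) * v) = (\<Sum>v\<in>H. if v \<in> G then \<iota> (l v) * v else 0)"
      using ca(1)[OF assms(1)] by (intro sum.cong) auto
    also have "\<dots> = (\<Sum>v\<in>H \<inter> G. \<iota> (l v) * v)" using sum.inter_restrict[OF fH] by metis
    also have "H \<inter> G = G" using H_def by auto
    finally show ?thesis using y by simp
  qed
  have "x + y = (\<Sum>v\<in>H. \<iota> ((if v \<in> F then k v else 0) + (if v \<in> G then l v else 0)) * v)"
    unfolding e1[symmetric] e2[symmetric] sum.distrib[symmetric] ca(3)[OF assms(1)]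
    by (simp add: distrib_right)
  then show ?thesis unfolding lin_span_def using fH H_def x y
    by (intro CollectI exI[of _ "\<lambda>v. (if v \<in> F then k v else 0) + (if v \<in> G then l v else 0)"] exI[of _ H]) simp
qed

lemma span_diff:
  assumes "C_algebra \<iota>" "x \<in> lin_span \<iota> S" "y \<in> lin_span \<iota> S" shows "x - y \<in> lin_span \<iota> S"
proof -
  have "\<iota> (-1) * y \<in> lin_span \<iota> S" using span_scal assms by blast
  moreover have "\<iota> (-1) * y = - y" using ca(2)[OF assms(1)] ca(6)[OF assms(1), of 1] by simp
  ultimately show ?thesis using span_add[OF assms(1,2)] by (metis diff_conv_add_uminus)
qed

lemma span2:
  assumes "C_algebra \<iota>" "x \<in> lin_span \<iota> {X, Y}"
  shows "\<exists>\<alpha> \<beta>. x = \<iota> \<alpha> * X + \<iota> \<beta> * Y"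
proof -
  note c = ca[OF assms(1)]
  obtain k F where x: "x = (\<Sum>v\<in>F. \<iota> (k v) * v)" "F \<subseteq> {X, Y}"
    using assms(2) unfolding lin_span_def by auto
  have "F = {} \<or> F = {X} \<or> F = {Y} \<or> F = {X, Y}" using x(2) by auto
  moreover have "X = Y \<Longrightarrow> F = {} \<or> F = {X}" using x(2) by auto
  ultimately show ?thesis
  proof (elim disjE)
    assume "F = {}" then show ?thesis using x ca(1,2)[OF assms(1)] by (intro exI[of _ 0]) auto
  next
    assume "F = {X}" then show ?thesis using x ca(1,2)[OF assms(1)] by (intro exI[of _ "k X"] exI[of _ 0]) auto
  next
    assume "F = {Y}" then show ?thesis using x ca(1,2)[OF assms(1)] by (intro exI[of _ 0] exI[of _ "k Y"]) auto
  next
    assume F: "F = {X, Y}"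
    show ?thesis
    proof (cases "X = Y")
      case True then show ?thesis using x ca(1,2)[OF assms(1)] F by (intro exI[of _ "k X"] exI[of _ 0]) auto
    next
      case False
      have "x = \<iota> (k X) * X + \<iota> (k Y) * Y" using x(1) F False by simp
      then show ?thesis by blast
    qed
  qed
qed

lemma cnj_unit: "norm (q::complex) = 1 \<Longrightarrow> cnj q = inverse q"
proof -
  assume n: "norm q = 1"
  have "q * cnj q = 1" using complex_norm_square[of q] n by simp
  then show ?thesis by (metis inverse_unique)
qed

theorem proposition5:
  fixes q sq :: complex and \<mu> \<nu> :: real
    and \<iota> :: "complex \<Rightarrow> 'a::ring_1" and \<iota>T :: "complex \<Rightarrow> 't::ring_1"
    and tns :: "'a \<Rightarrow> 'a \<Rightarrow> 't" and st S :: "'a \<Rightarrow> 'a" and Dl :: "'a \<Rightarrow> 't"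
    and ep :: "'a \<Rightarrow> complex" and a b c d :: 'a
  assumes "norm q = 1"
    and "\<forall>n::nat. n > 0 \<longrightarrow> q ^ n \<noteq> 1"
    and "sq ^ 2 = q"
    and "SLq2R q \<iota> \<iota>T tns st Dl ep S a b c d"
  defines "C \<equiv> lin_span \<iota> {a - d + \<iota> (2 * sq * complex_of_real \<mu>) * b,
                            \<iota> (q * complex_of_real \<nu>) * b + c}"
  shows "two_sided_coideal \<iota>T tns Dl ep C \<and> tau_invariant st S C"
proof -
  note H = assms(4)[unfolded SLq2R_def]
  have ci: "C_algebra \<iota>" using H by (elim conjE) metis
  have tA: "tensor_alg \<iota> \<iota>T tns" using H by (elim conjE) metis
  have ciT: "C_algebra \<iota>T" using tA unfolding tensor_alg_def by blast
  have tl: "\<forall>x y. tns (x + y) z = tns x z + tns y z" for z using tA unfolding tensor_alg_def by blast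
  have tr: "\<forall>y z. tns x (y + z) = tns x y + tns x z" for x using tA unfolding tensor_alg_def by blast
  have tsl: "tns (\<iota> k * x) y = \<iota>T k * tns x y" for k x y using tA unfolding tensor_alg_def by blast
  have tsr: "tns x (\<iota> k * y) = \<iota>T k * tns x y" for k x y using tA unfolding tensor_alg_def by blast
  have tld: "tns (x - y) z = tns x z - tns y z" for x y z using addf(2)[OF tl] .
  have trd: "tns z (x - y) = tns z x - tns z y" for x y z using addf(2)[OF tr] .
  have tla: "tns (x + y) z = tns x z + tns y z" for x y z using tl by blast
  have tra: "tns z (x + y) = tns z x + tns z y" for x y z using tr by blast
  have stadd: "\<forall>x y. st (x + y) = st x + st y" using H by (elim conjE) metis
  have stmul: "st (x * y) = st y * st x" for x y using H by (elim conjE) metis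
  have stsc: "st (\<iota> z) = \<iota> (cnj z)" for z using H by (elim conjE) metis
  have Dadd: "\<forall>x y. Dl (x + y) = Dl x + Dl y" using H by (elim conjE) metis
  have Dmul: "Dl (x * y) = Dl x * Dl y" for x y using H by (elim conjE) metis
  have Dsc: "Dl (\<iota> z) = \<iota>T z" for z using H by (elim conjE) metis
  have eadd: "\<forall>x y. ep (x + y) = ep x + ep y" using H by (elim conjE) metis
  have emul: "ep (x * y) = ep x * ep y" for x y using H by (elim conjE) metis
  have esc: "ep (\<iota> z) = z" for z using H by (elim conjE) metis
  have Sadd: "\<forall>x y. S (x + y) = S x + S y" using H by (elim conjE) metis
  have Smul: "S (x * y) = S y * S x" for x y using H by (elim conjE) metis
  have Ssc: "S (\<iota> z) = \<iota> z" for z using H by (elim conjE) metis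
  have sa: "st a = a" "st b = b" "st c = c" "st d = d" using H by ((elim conjE, metis)+)
  have Da: "Dl a = tns a a + tns b c" "Dl b = tns a b + tns b d"
     "Dl c = tns c a + tns d c" "Dl d = tns c b + tns d d" using H by ((elim conjE, metis)+)
  have ea: "ep a = 1" "ep d = 1" "ep b = 0" "ep c = 0" using H by ((elim conjE, metis)+)
  have Sa: "S a = d" "S b = - (\<iota> (inverse q) * b)" "S c = - (\<iota> q * c)" "S d = a" using H by ((elim conjE, metis)+)
  note c = ca[OF ci]
  note cT = ca[OF ciT]
  have stS: "st (\<iota> z * x) = \<iota> (cnj z) * st x" for z x using stmul stsc c(5) by metis
  have SS: "S (\<iota> z * x) = \<iota> z * S x" for z x using Smul Ssc c(5) by metis
  have DS: "Dl (\<iota> z * x) = \<iota>T z * Dl x" for z x using Dmul Dsc by metis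
  have eS: "ep (\<iota> z * x) = z * ep x" for z x using emul esc by metis

  define m where "m = 2 * sq * complex_of_real \<mu>"
  define X where "X = a - d + \<iota> m * b"
  define Y where "Y = \<iota> (q * complex_of_real \<nu>) * b + c"
  define n where "n = q * complex_of_real \<nu>"
  have Cd: "C = lin_span \<iota> {X, Y}" unfolding C_def X_def Y_def m_def ..
  have XC: "X \<in> C" unfolding Cd by (rule span_gen[OF ci]) simp
  have YC: "Y \<in> C" unfolding Cd by (rule span_gen[OF ci]) simp
  have Cdec: "\<exists>\<alpha> \<beta>. x = \<iota> \<alpha> * X + \<iota> \<beta> * Y" if "x \<in> C" for x
    using span2[OF ci] that unfolding Cd by blast

  have eX: "ep X = 0" unfolding X_def using addf(2)[OF eadd] eadd eS ea by simp
  have eY: "ep Y = 0" unfolding Y_def using eadd eS ea by simp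
  have part1: "\<forall>x\<in>C. ep x = 0"
  proof
    fix x assume "x \<in> C"
    then obtain \<alpha> \<beta> where "x = \<iota> \<alpha> * X + \<iota> \<beta> * Y" using Cdec by blast
    then show "ep x = 0" using eadd eS eX eY by simp
  qed

  define T where "T = {tns i y | i y. i \<in> C} \<union> {tns y i | i y. i \<in> C}"
  have L: "tns i y \<in> lin_span \<iota>T T" if "i \<in> C" for i y
    using that by (intro span_gen[OF ciT]) (auto simp: T_def)
  have R: "tns y i \<in> lin_span \<iota>T T" if "i \<in> C" for i y
    using that by (intro span_gen[OF ciT]) (auto simp: T_def)
  have DX: "Dl X = tns X a + tns d X + \<iota>T m * tns X b - \<iota>T m * tns b X + tns b Y - tns Y b"
  proof -
    have "Dl X = Dl a - Dl d + \<iota>T m * Dl b" unfolding X_def using addf(2)[OF Dadd] Dadd DS by simp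
    also have "\<dots> = tns a a + tns b c - (tns c b + tns d d) + \<iota>T m * (tns a b + tns b d)"
      using Da by simp
    also have "\<dots> = tns X a + tns d X + \<iota>T m * tns X b - \<iota>T m * tns b X + tns b Y - tns Y b"
      unfolding X_def Y_def 
      by (simp only: tld trd tla tra tsl tsr) (simp add: algebra_simps)
    finally show ?thesis .
  qed
  have DY: "Dl Y = tns Y a + tns d Y + \<iota>T n * tns X b - \<iota>T n * tns b X"
  proof -
    have "Dl Y = \<iota>T n * Dl b + Dl c" unfolding Y_def n_def using Dadd DS by simp
    also have "\<dots> = \<iota>T n * (tns a b + tns b d) + (tns c a + tns d c)"
      using Da by simp
    also have "\<dots> = tns Y a + tns d Y + \<iota>T n * tns X b - \<iota>T n * tns b X"
      unfolding X_def Y_def n_def[symmetric] 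
      by (simp only: tld trd tla tra tsl tsr) (simp add: algebra_simps)
    finally show ?thesis .
  qed
  have DXs: "Dl X \<in> lin_span \<iota>T T" unfolding DX
    by (intro span_add[OF ciT] span_diff[OF ciT] span_scal[OF ciT] L R XC YC)
  have DYs: "Dl Y \<in> lin_span \<iota>T T" unfolding DY
    by (intro span_add[OF ciT] span_diff[OF ciT] span_scal[OF ciT] L R XC YC)
  have part2: "\<forall>x\<in>C. Dl x \<in> lin_span \<iota>T T"
  proof
    fix x assume "x \<in> C"
    then obtain \<alpha> \<beta> where "x = \<iota> \<alpha> * X + \<iota> \<beta> * Y" using Cdec by blast
    then have "Dl x = \<iota>T \<alpha> * Dl X + \<iota>T \<beta> * Dl Y" using Dadd DS by simp
    then show "Dl x \<in> lin_span \<iota>T T"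
      by (simp add: span_add[OF ciT] span_scal[OF ciT] DXs DYs)
  qed

  have q0: "q \<noteq> 0" using assms(1) by auto
  have cq: "cnj q = inverse q" using cnj_unit[OF assms(1)] .
  have nsq: "norm sq = 1"
  proof -
    have "norm sq ^ 2 = 1" using assms(1,3) by (metis norm_power)
    then show ?thesis using norm_ge_zero[of sq] by (auto simp add: power2_eq_1_iff)
  qed
  have csq: "cnj sq = inverse sq" using cnj_unit[OF nsq] .
  have sq0: "sq \<noteq> 0" using nsq by auto
  have qs: "q * cnj sq = sq"
  proof -
    have "q * cnj sq = sq * (sq * cnj sq)" using assms(3) by (simp add: power2_eq_square mult.assoc)
    then show ?thesis using csq sq0 by simp
  qed
  have k1: "cnj m * cnj (inverse q) = m"
    unfolding m_def using qs cq by (simp add: complex_cnj_inverse mult.assoc mult.left_commute mult.commute)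
  have k2: "cnj n * cnj (inverse q) = complex_of_real \<nu>"
    unfolding n_def using cq q0 by (simp add: field_simps)
  have stdiff: "st (x - y) = st x - st y" for x y using addf(2)[OF stadd] .
  have stneg: "st (- x) = - st x" for x using addf(3)[OF stadd] .
  have Sdiff: "S (x - y) = S x - S y" for x y using addf(2)[OF Sadd] .
  have Sneg: "S (- x) = - S x" for x using addf(3)[OF Sadd] .
  have tX: "st (S X) = \<iota> (-1) * X"
  proof -
    have "st (S X) = d - a + \<iota> (cnj m) * (- (\<iota> (cnj (inverse q)) * b))"
      unfolding X_def using Sdiff Sadd SS Sa stdiff stadd stS sa stneg by simp
    also have "\<dots> = d - a - \<iota> m * b"
      using c(4)[of "cnj m" "cnj (inverse q)"] k1 by (simp add: mult.assoc)
    also have "\<dots> = \<iota> (-1) * X" unfolding X_def c(6) c(2) by (simp add: algebra_simps)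
    finally show ?thesis .
  qed
  have tY: "st (S Y) = \<iota> (- inverse q) * Y"
  proof -
    have "st (S Y) = \<iota> (cnj n) * (- (\<iota> (cnj (inverse q)) * b)) + - (\<iota> (cnj q) * c)"
      unfolding Y_def n_def[symmetric] using Sadd SS Sa stadd stS sa stneg stdiff by simp
    also have "\<dots> = - (\<iota> (complex_of_real \<nu>) * b) - \<iota> (inverse q) * c"
      using c(4)[of "cnj n" "cnj (inverse q)"] k2 cq by (simp add: mult.assoc)
    also have "\<dots> = \<iota> (- inverse q) * Y"
    proof -
      have e: "\<iota> (- inverse q) * Y = \<iota> (- inverse q * n) * b + \<iota> (- inverse q) * c"
        unfolding Y_def n_def[symmetric] by (simp only: distrib_left c(4) mult.assoc)
      have "- inverse q * n = - complex_of_real \<nu>" using q0 unfolding n_def by simp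
      then show ?thesis unfolding e by (simp add: c(6))
    qed
    finally show ?thesis .
  qed
  have part3: "\<forall>x\<in>C. st (S x) \<in> C"
  proof
    fix x assume "x \<in> C"
    then obtain \<alpha> \<beta> where "x = \<iota> \<alpha> * X + \<iota> \<beta> * Y" using Cdec by blast
    then have "st (S x) = \<iota> (cnj \<alpha>) * st (S X) + \<iota> (cnj \<beta>) * st (S Y)"
      using Sadd SS stadd stS by simp
    then show "st (S x) \<in> C" unfolding tX tY Cd
      using XC YC unfolding Cd by (simp add: span_add[OF ci] span_scal[OF ci])
  qed
  show ?thesis unfolding two_sided_coideal_def tau_invariant_def T_def[symmetric]
    using part1 part2 part3 by blast
qed

end
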